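(* Suppose there exists an $[n,k_0]$ code $C_0$ over $\mathbb{F}_q$ with $d(C_0^\perp)=\delta\ge 3$. If $C$ is an $[n,k]$ code over $\mathbb{F}_q$ with $d(C^\perp)=\delta$ and $k>k_0$, then $\gamma(C)\le k-d(C^\perp)+2$.
   Context: An $[n,k]$ code over $\mathbb{F}_q$ is a $k$-dimensional subspace $C\subseteq\mathbb{F}_q^n$; write $E=\{1,\dots,n\}$. For $\bm{x}\in\mathbb{F}_q^n$, $\mathrm{supp}(\bm{x})=\{i: x_i\neq 0\}$ and the weight is $|\mathrm{supp}(\bm{x})|$; for $B\subseteq\mathbb{F}_q^n$, $\mathrm{Supp}(B)=\bigcup_{\bm{x}\in B}\mathrm{supp}(\bm{x})$. $C^\perp$ is the dual code with respect to the standard inner product and $d(C^\perp)$ is the minimum weight of a nonzero codeword of $C^\perp$. The covering dimension is $\gamma(C)=\infty$ if $\mathrm{Supp}(C)\neq E$, and otherwise $\gamma(C)$ is the least positive integer $r$ such that $C$ has an $r$-dimensional subspace $D$ with $\mathrm{Supp}(D)=E$. *)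

theory Defs
  imports "HOL-Analysis.Analysis" "HOL-Library.Extended_Nat"
begin

text \<open>Linear codes of length n = CARD('n) over a finite field 'a (q = CARD('a)),
  i.e. subspaces of 'a ^ 'n; the coordinate set E is UNIV :: 'n set.\<close>

definition is_code :: "('a::{field,finite} ^ 'n::finite) set \<Rightarrow> nat \<Rightarrow> bool" where
  "is_code C k \<longleftrightarrow> vec.subspace C \<and> vec.dim C = k"

definition supp :: "'a::zero ^ 'n::finite \<Rightarrow> 'n set" where
  "supp x = {i. x $ i \<noteq> 0}"

definition Supp :: "('a::zero ^ 'n::finite) set \<Rightarrow> 'n set" where
  "Supp B = (\<Union>x\<in>B. supp x)"

definition wt :: "'a::zero ^ 'n::finite \<Rightarrow> nat" where
  "wt x = card (supp x)"

definition dual_code :: "('a::field ^ 'n::finite) set \<Rightarrow> ('a ^ 'n) set" where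
  "dual_code C = {y. \<forall>x\<in>C. (\<Sum>i\<in>UNIV. x $ i * y $ i) = 0}"

definition min_dist :: "('a::zero ^ 'n::finite) set \<Rightarrow> nat" where
  "min_dist D = (LEAST w. \<exists>x\<in>D. x \<noteq> 0 \<and> wt x = w)"

definition covering_dim :: "('a::{field,finite} ^ 'n::finite) set \<Rightarrow> enat" where
  "covering_dim C =
     (if Supp C \<noteq> UNIV then \<infinity>
      else enat (LEAST r. 0 < r \<and> (\<exists>D. vec.subspace D \<and> D \<subseteq> C \<and> vec.dim D = r \<and> Supp D = UNIV)))"

end

theory Submission
  imports Defs
begin


lemma card_field_ge2: "2 \<le> CARD('a::{field,finite})"
proof -
  have "card {0::'a, 1} = 2" by simp
  moreover have "card {0::'a,1} \<le> CARD('a)" by (rule card_mono) auto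
  ultimately show ?thesis by simp
qed

lemma orth_span:
  fixes y :: "'a::field^'n::finite"
  assumes "\<forall>b\<in>B. (\<Sum>i\<in>UNIV. b$i * y$i) = 0" "x \<in> vec.span B"
  shows "(\<Sum>i\<in>UNIV. x$i * y$i) = 0"
proof -
  have "vec.subspace {x. (\<Sum>i\<in>UNIV. x$i * y$i) = 0}"
    unfolding vec.subspace_def by (auto simp: distrib_right sum.distrib mult.assoc simp flip: sum_distrib_left)
  then have "vec.span B \<subseteq> {x. (\<Sum>i\<in>UNIV. x$i * y$i) = 0}"
    using assms(1) by (intro vec.span_minimal) auto
  then show ?thesis using assms(2) by auto
qed

lemma F1:
  fixes B Y :: "('a::{field,finite}^'n::finite) set"
  assumes "finite B" "inj_on (\<lambda>y. restrict (\<lambda>b. \<Sum>i\<in>UNIV. b$i * y$i) B) Y"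
  shows "card Y \<le> CARD('a) ^ card B"
proof -
  have "card Y = card ((\<lambda>y. restrict (\<lambda>b. \<Sum>i\<in>UNIV. b$i * y$i) B) ` Y)"
    using assms(2) by (simp add: card_image)
  also have "\<dots> \<le> card (PiE B (\<lambda>_. UNIV :: 'a set))"
    by (rule card_mono) (auto simp: assms(1) finite_PiE)
  also have "\<dots> = CARD('a) ^ card B" using assms(1) by (simp add: card_PiE)
  finally show ?thesis .
qed

lemma F2:
  fixes W :: "('a::{field,finite}^'n::finite) set"
  assumes "vec.subspace W" "W \<noteq> UNIV"
  shows "\<exists>y. y \<noteq> 0 \<and> (\<forall>x\<in>W. (\<Sum>i\<in>UNIV. x$i * y$i) = 0)"
proof -
  obtain B where B: "B \<subseteq> W" "vec.independent B" "W \<subseteq> vec.span B" "card B = vec.dim W"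
    using vec.basis_exists by blast
  have fB: "finite B" using B(2) vec.finiteI_independent by blast
  have dimn: "vec.dim (UNIV::('a^'n) set) = CARD('n)" by (simp add: card_cart_basis)
  have "vec.dim W \<le> vec.dim (UNIV::('a^'n) set)" by (rule vec.dim_subset) simp
  then have "vec.dim W \<le> CARD('n)" using dimn by simp
  moreover have "vec.dim W \<noteq> CARD('n)"
  proof
    assume "vec.dim W = CARD('n)"
    then have "vec.span W = UNIV"
      using vec.dim_eq_span[of W UNIV] dimn by simp
    then show False using assms vec.span_eq_iff by blast
  qed
  ultimately have lt: "card B < CARD('n)" using B(4) by simp
  have "\<not> inj_on (\<lambda>y. restrict (\<lambda>b. \<Sum>i\<in>UNIV. b$i * y$i) B) (UNIV :: ('a^'n) set)"
  proof
    assume "inj_on (\<lambda>y. restrict (\<lambda>b. \<Sum>i\<in>UNIV. b$i * y$i) B) (UNIV :: ('a^'n) set)"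
    from F1[OF fB this] have "CARD('a) ^ CARD('n) \<le> CARD('a) ^ card B" by simp
    moreover have "CARD('a) ^ card B < CARD('a) ^ CARD('n)"
      using lt card_field_ge2[where 'a='a] by (intro power_strict_increasing) auto
    ultimately show False by simp
  qed
  then obtain y y' where yy: "y \<noteq> y'"
    "restrict (\<lambda>b. \<Sum>i\<in>UNIV. b$i * y$i) B = restrict (\<lambda>b. \<Sum>i\<in>UNIV. b$i * y'$i) B"
    unfolding inj_on_def by blast
  have "\<forall>b\<in>B. (\<Sum>i\<in>UNIV. b$i * (y - y')$i) = 0"
  proof
    fix b assume "b \<in> B"
    then have "(\<Sum>i\<in>UNIV. b$i * y$i) = (\<Sum>i\<in>UNIV. b$i * y'$i)"
      using fun_cong[OF yy(2), of b] by simp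
    then show "(\<Sum>i\<in>UNIV. b$i * (y - y')$i) = 0"
      by (simp add: algebra_simps sum_subtractf)
  qed
  note orth = this
  show ?thesis
  proof (intro exI conjI ballI)
    show "y - y' \<noteq> 0" using yy(1) by simp
    fix x assume "x \<in> W"
    then show "(\<Sum>i\<in>UNIV. x$i * (y - y')$i) = 0"
      using orth_span[OF orth] B(3) by blast
  qed
qed

lemma P_of: assumes "min_dist D = \<delta>" "y \<in> D" "y \<noteq> 0" shows "\<delta> \<le> wt y"
proof -
  have "(LEAST w. \<exists>x\<in>D. x \<noteq> 0 \<and> wt x = w) \<le> wt y"
    by (rule Least_le) (use assms in auto)
  then show ?thesis using assms(1) unfolding min_dist_def by simp
qed

lemma wt_le: "supp (y::'a::zero^'n::finite) \<subseteq> R \<Longrightarrow> wt y \<le> card R"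
  unfolding wt_def by (rule card_mono) auto

lemma reduce:
  fixes B C :: "('a::{field,finite}^'n::finite) set" and I :: "'n set"
  assumes sub: "vec.subspace C" and BC: "B \<subseteq> C" and fin: "finite B"
    and cov: "\<forall>i\<in>I. \<exists>b\<in>B. b$i \<noteq> 0"
    and big: "1 + (CARD('a) - 1) * card I < CARD('a) ^ card B"
  shows "\<exists>B'. finite B' \<and> B' \<subseteq> C \<and> card B' \<le> card B - 1 \<and> (\<forall>i\<in>I. \<exists>b\<in>B'. b$i \<noteq> 0)"
proof -
  define Bad where "Bad = insert (restrict (\<lambda>b. 0::'a) B)
     ((\<lambda>(c,i). restrict (\<lambda>b. c * b$i) B) ` ((UNIV - {0::'a}) \<times> I))"
  have "card ((\<lambda>(c,i). restrict (\<lambda>b. c * b$i) B) ` ((UNIV - {0::'a}) \<times> I)) \<le> card ((UNIV - {0::'a}) \<times> I)"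
    by (rule card_image_le) simp
  also have "\<dots> = (CARD('a) - 1) * card I"
    by (simp add: card_cartesian_product card_Diff_singleton)
  moreover have "card Bad \<le> Suc (card ((\<lambda>(c,i). restrict (\<lambda>b. c * b$i) B) ` ((UNIV - {0::'a}) \<times> I)))"
    unfolding Bad_def by (simp add: card_insert_if)
  ultimately have cardBad: "card Bad \<le> 1 + (CARD('a) - 1) * card I" by linarith
  have "\<not> PiE B (\<lambda>_. UNIV :: 'a set) \<subseteq> Bad"
  proof
    assume "PiE B (\<lambda>_. UNIV :: 'a set) \<subseteq> Bad"
    then have "card (PiE B (\<lambda>_. UNIV :: 'a set)) \<le> card Bad"
      by (rule card_mono[rotated]) (simp add: Bad_def)
    moreover have "card (PiE B (\<lambda>_. UNIV :: 'a set)) = CARD('a) ^ card B"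
      using fin by (simp add: card_PiE)
    ultimately show False using cardBad big by simp
  qed
  then obtain f where f: "f \<in> PiE B (\<lambda>_. UNIV :: 'a set)" "f \<notin> Bad" by blast
  have "\<exists>b0\<in>B. f b0 \<noteq> 0"
  proof (rule ccontr)
    assume "\<not> (\<exists>b0\<in>B. f b0 \<noteq> 0)"
    then have "f = restrict (\<lambda>b. 0::'a) B"
      using f(1) by (auto simp: PiE_def extensional_def fun_eq_iff)
    then show False using f(2) by (simp add: Bad_def)
  qed
  then obtain b0 where b0: "b0 \<in> B" "f b0 \<noteq> 0" by blast
  define B' where "B' = (\<lambda>b. b - (f b / f b0) *s b0) ` (B - {b0})"
  have "finite B'" using fin by (simp add: B'_def)
  moreover have "B' \<subseteq> C"
    using BC b0(1) sub unfolding B'_def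
    by (auto intro!: vec.subspace_diff vec.subspace_scale)
  moreover have "card B' \<le> card B - 1"
  proof -
    have "card B' \<le> card (B - {b0})" unfolding B'_def by (rule card_image_le) (simp add: fin)
    then show ?thesis using b0(1) fin by simp
  qed
  moreover have "\<forall>i\<in>I. \<exists>b\<in>B'. b$i \<noteq> 0"
  proof
    fix i assume iI: "i \<in> I"
    show "\<exists>b\<in>B'. b$i \<noteq> 0"
    proof (rule ccontr)
      assume na: "\<not> (\<exists>b\<in>B'. b$i \<noteq> 0)"
      have hb: "b$i = (f b / f b0) * b0$i" if "b \<in> B" for b
      proof (cases "b = b0")
        case True then show ?thesis using b0(2) by simp
      next
        case False
        then have "(b - (f b / f b0) *s b0) \<in> B'" using that unfolding B'_def by blast
        then have "(b - (f b / f b0) *s b0)$i = 0" using na by blast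
        then show ?thesis by simp
      qed
      obtain b1 where b1: "b1 \<in> B" "b1$i \<noteq> 0" using cov iI by blast
      have nz: "b0$i \<noteq> 0" using hb[OF b1(1)] b1(2) by auto
      define c where "c = f b0 / b0$i"
      have cnz: "c \<noteq> 0" using nz b0(2) by (simp add: c_def)
      have "f = restrict (\<lambda>b. c * b$i) B"
      proof
        fix x show "f x = restrict (\<lambda>b. c * b$i) B x"
        proof (cases "x \<in> B")
          case True
          then show ?thesis using hb[OF True] nz b0(2) by (simp add: c_def field_simps)
        next
          case False
          then show ?thesis using f(1) by (auto simp: PiE_def extensional_def)
        qed
      qed
      then have "f \<in> (\<lambda>(c,i). restrict (\<lambda>b. c * b$i) B) ` ((UNIV - {0::'a}) \<times> I)"
        by (intro image_eqI[where x="(c,i)"]) (auto simp: cnz iI)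
      then have "f \<in> Bad" unfolding Bad_def by blast
      then show False using f(2) by blast
    qed
  qed
  ultimately show ?thesis by blast
qed


lemma reduce_iter:
  fixes C :: "('a::{field,finite}^'n::finite) set" and I :: "'n set"
  assumes sub: "vec.subspace C"
    and big: "\<forall>p\<ge>m. 1 + (CARD('a) - 1) * card I < CARD('a) ^ p"
  shows "finite B \<Longrightarrow> B \<subseteq> C \<Longrightarrow> \<forall>i\<in>I. \<exists>b\<in>B. b$i \<noteq> 0 \<Longrightarrow>
    \<exists>B'. finite B' \<and> B' \<subseteq> C \<and> card B' \<le> m - 1 \<and> (\<forall>i\<in>I. \<exists>b\<in>B'. b$i \<noteq> 0)"
proof (induction "card B" arbitrary: B rule: less_induct)
  case less
  show ?case
  proof (cases "card B \<le> m - 1")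
    case True then show ?thesis using less.prems by blast
  next
    case False
    then have "1 + (CARD('a) - 1) * card I < CARD('a) ^ card B" using big by simp
    from reduce[OF sub less.prems(2) less.prems(1) less.prems(3) this]
    obtain B' where B': "finite B'" "B' \<subseteq> C" "card B' \<le> card B - 1" "\<forall>i\<in>I. \<exists>b\<in>B'. b$i \<noteq> 0"
      by blast
    have "card B' < card B" using B'(3) False by linarith
    then show ?thesis using less.hyps B' by blast
  qed
qed

lemma inj_dual:
  fixes B C0 Y :: "('a::{field,finite}^'n::finite) set"
  assumes "C0 \<subseteq> vec.span B"
    and P: "\<forall>y\<in>dual_code C0. y \<noteq> 0 \<longrightarrow> \<delta> \<le> wt y"
    and small: "\<forall>y\<in>Y. \<forall>y'\<in>Y. wt (y - y') < \<delta>"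
  shows "inj_on (\<lambda>y. restrict (\<lambda>b. \<Sum>i\<in>UNIV. b$i * y$i) B) Y"
proof (rule inj_onI)
  fix y y' assume yY: "y \<in> Y" "y' \<in> Y"
    and eq: "restrict (\<lambda>b. \<Sum>i\<in>UNIV. b$i * y$i) B = restrict (\<lambda>b. \<Sum>i\<in>UNIV. b$i * y'$i) B"
  have "\<forall>b\<in>B. (\<Sum>i\<in>UNIV. b$i * (y - y')$i) = 0"
  proof
    fix b assume "b \<in> B"
    then have "(\<Sum>i\<in>UNIV. b$i * y$i) = (\<Sum>i\<in>UNIV. b$i * y'$i)"
      using fun_cong[OF eq, of b] by simp
    then show "(\<Sum>i\<in>UNIV. b$i * (y - y')$i) = 0"
      by (simp add: algebra_simps sum_subtractf)
  qed
  then have "y - y' \<in> dual_code C0"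
    using orth_span assms(1) unfolding dual_code_def by blast
  moreover have "wt (y - y') < \<delta>" using small yY by blast
  ultimately show "y = y'" using P by force
qed

lemma cover_T:
  fixes C :: "('a::{field,finite}^'n::finite) set" and T :: "'n set"
  assumes sub: "vec.subspace C" and P: "\<forall>y\<in>dual_code C. y \<noteq> 0 \<longrightarrow> \<delta> \<le> wt y"
    and cT: "card T < \<delta>"
  shows "\<exists>d\<in>C. \<forall>t\<in>T. d$t = 1"
proof -
  define Z where "Z = {z :: 'a^'n. \<forall>t\<in>T. z$t = 0}"
  have subZ: "vec.subspace Z" unfolding vec.subspace_def Z_def by auto
  define W where "W = {x + z |x z. x \<in> C \<and> z \<in> Z}"
  have subW: "vec.subspace W" unfolding W_def by (rule vec.subspace_sums[OF sub subZ])
  define one :: "'a^'n" where "one = (\<chi> i. 1)"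
  show ?thesis
  proof (cases "one \<in> W")
    case True
    then obtain x z where xz: "one = x + z" "x \<in> C" "z \<in> Z" unfolding W_def by blast
    have "\<forall>t\<in>T. x$t = 1"
    proof
      fix t assume "t \<in> T"
      then have "z$t = 0" using xz(3) unfolding Z_def by blast
      moreover have "one$t = x$t + z$t" using xz(1) by simp
      ultimately show "x$t = 1" unfolding one_def by simp
    qed
    then show ?thesis using xz(2) by blast
  next
    case False
    then have "W \<noteq> UNIV" by blast
    from F2[OF subW this] obtain y where y: "y \<noteq> 0" "\<forall>x\<in>W. (\<Sum>i\<in>UNIV. x$i * y$i) = 0"
      by blast
    have "supp y \<subseteq> T"
    proof
      fix j assume "j \<in> supp y"
      show "j \<in> T"
      proof (rule ccontr)
        assume "j \<notin> T"
        then have "axis j 1 \<in> Z" unfolding Z_def by (auto simp: axis_def)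
        moreover have "0 \<in> C" using sub vec.subspace_0 by blast
        ultimately have "0 + axis j 1 \<in> W" unfolding W_def by blast
        then have "(\<Sum>i\<in>UNIV. (axis j 1 :: 'a^'n)$i * y$i) = 0" using y(2) by simp
        moreover have "(\<Sum>i\<in>UNIV. (axis j 1 :: 'a^'n)$i * y$i) = (\<Sum>i\<in>UNIV. if i = j then y$i else 0)"
          by (rule sum.cong) (auto simp: axis_def)
        ultimately have "y$j = 0" by simp
        then show False using \<open>j \<in> supp y\<close> unfolding supp_def by simp
      qed
    qed
    then have "wt y < \<delta>" using wt_le cT by (meson le_less_trans)
    moreover have "y \<in> dual_code C"
    proof -
      have "0 \<in> Z" unfolding Z_def by simp
      then have "\<forall>x\<in>C. x + 0 \<in> W" unfolding W_def by blast
      then show ?thesis using y(2) unfolding dual_code_def by simp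
    qed
    ultimately show ?thesis using P y(1) by force
  qed
qed



lemma C0_count:
  fixes C0 :: "('a::{field,finite}^'n::finite) set" and T' :: "'n set"
  assumes sub: "vec.subspace C0" and dim: "vec.dim C0 = k0"
    and P: "\<forall>y\<in>dual_code C0. y \<noteq> 0 \<longrightarrow> \<delta> \<le> wt y"
    and cT: "card T' + 2 < \<delta>" and i0: "i0 \<notin> T'"
  shows "CARD('a) ^ card T' * (1 + (CARD('a) - 1) * card (UNIV - T')) \<le> CARD('a) ^ k0"
proof -
  obtain B where B: "B \<subseteq> C0" "vec.independent B" "C0 \<subseteq> vec.span B" "card B = vec.dim C0"
    using vec.basis_exists by blast
  have fB: "finite B" using B(2) vec.finiteI_independent by blast
  define I' where "I' = UNIV - T'"
  define E where "E = insert (0::'a, i0) ((UNIV - {0}) \<times> I')"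
  define Dm where "Dm = PiE T' (\<lambda>_. UNIV::'a set) \<times> E"
  define g where "g = (\<lambda>(f, c, i). (\<chi> j. if j \<in> T' then f j else if j = i then c else 0) :: 'a^'n)"
  have Ei: "i \<notin> T'" "c = 0 \<Longrightarrow> i = i0" if "(c, i) \<in> E" for c i
    using that i0 unfolding E_def I'_def by auto
  have injg: "inj_on g Dm"
  proof (rule inj_onI)
    fix x y assume xD: "x \<in> Dm" and yD: "y \<in> Dm" and gxy: "g x = g y"
    obtain f c i where x: "x = (f, c, i)" by (cases x) blast
    obtain f' c' i' where y: "y = (f', c', i')" by (cases y) blast
    have fD: "f \<in> PiE T' (\<lambda>_. UNIV)" "(c, i) \<in> E" using xD x unfolding Dm_def by auto
    have fD': "f' \<in> PiE T' (\<lambda>_. UNIV)" "(c', i') \<in> E" using yD y unfolding Dm_def by auto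
    have ev: "(if j \<in> T' then f j else if j = i then c else 0) =
              (if j \<in> T' then f' j else if j = i' then c' else 0)" for j
    proof -
      have "g (f, c, i) $ j = g (f', c', i') $ j" using gxy x y by simp
      then show ?thesis unfolding g_def by simp
    qed
    have "f = f'"
    proof
      fix j show "f j = f' j"
      proof (cases "j \<in> T'")
        case True then show ?thesis using ev[of j] by simp
      next
        case False then show ?thesis using fD(1) fD'(1) by (simp add: PiE_def extensional_def)
      qed
    qed
    moreover have "(c, i) = (c', i')"
    proof (cases "c = 0")
      case True
      have "c' = 0"
      proof (rule ccontr)
        assume "c' \<noteq> 0"
        moreover have "i' \<notin> T'" using Ei[OF fD'(2)] by blast
        ultimately show False using ev[of i'] True by (cases "i' = i") simp_all
      qed
      then show ?thesis using True Ei[OF fD(2)] Ei[OF fD'(2)] by simp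
    next
      case False
      moreover have "i \<notin> T'" using Ei[OF fD(2)] by blast
      ultimately show ?thesis using ev[of i] by (cases "i' = i") simp_all
    qed
    ultimately show "x = y" using x y by simp
  qed
  have cardE: "card E = 1 + (CARD('a) - 1) * card I'"
  proof -
    have "(0::'a, i0) \<notin> (UNIV - {0}) \<times> I'" by simp
    then have "card E = Suc (card ((UNIV - {0::'a}) \<times> I'))"
      unfolding E_def by (simp add: card_insert_if)
    then show ?thesis by (simp add: card_cartesian_product card_Diff_singleton)
  qed
  have cardDm: "card Dm = CARD('a) ^ card T' * card E"
    unfolding Dm_def by (simp add: card_cartesian_product card_PiE)
  have small: "\<forall>y\<in>g ` Dm. \<forall>y'\<in>g ` Dm. wt (y - y') < \<delta>"
  proof (intro ballI)
    fix y y' assume "y \<in> g ` Dm" "y' \<in> g ` Dm"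
    then obtain z z' where "y = g z" "y' = g z'" by blast
    moreover obtain f c i where "z = (f, c, i)" by (cases z) blast
    moreover obtain f' c' i' where "z' = (f', c', i')" by (cases z') blast
    ultimately have y: "y = g (f, c, i)" and y': "y' = g (f', c', i')" by simp_all
    have "supp (y - y') \<subseteq> T' \<union> {i, i'}"
      unfolding supp_def y y' g_def by auto
    then have "wt (y - y') \<le> card (T' \<union> {i, i'})" by (rule wt_le)
    also have "\<dots> \<le> card T' + card {i, i'}" by (rule card_Un_le)
    also have "card {i, i'} \<le> 2" by (simp add: card_insert_if)
    finally show "wt (y - y') < \<delta>" using cT by linarith
  qed
  have "card (g ` Dm) \<le> CARD('a) ^ card B"
    by (rule F1[OF fB inj_dual[OF B(3) P small]])
  then show ?thesis
    using card_image[OF injg] cardDm cardE B(4) dim unfolding I'_def by simp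
qed



theorem mainTheorem14:
  fixes C0 C :: "('a::{field,finite} ^ 'n::finite) set"
    and k0 k \<delta> :: nat
  assumes "is_code C0 k0"
    and "min_dist (dual_code C0) = \<delta>"
    and "\<delta> \<ge> 3"
    and "is_code C k"
    and "min_dist (dual_code C) = \<delta>"
    and "k > k0"
  shows "covering_dim C \<le> enat (k + 2 - min_dist (dual_code C))"
proof -
  let ?q = "CARD('a)"
  let ?N = "CARD('n)"
  have q2: "2 \<le> ?q" by (rule card_field_ge2)
  have subC: "vec.subspace C" and dimC: "vec.dim C = k" using assms(4) unfolding is_code_def by auto
  have subC0: "vec.subspace C0" and dimC0: "vec.dim C0 = k0" using assms(1) unfolding is_code_def by auto
  have PC: "\<forall>y\<in>dual_code C. y \<noteq> 0 \<longrightarrow> \<delta> \<le> wt y" using P_of[OF assms(5)] by blast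
  have PC0: "\<forall>y\<in>dual_code C0. y \<noteq> 0 \<longrightarrow> \<delta> \<le> wt y" using P_of[OF assms(2)] by blast
  have kN: "k \<le> ?N"
  proof -
    have "vec.dim C \<le> vec.dim (UNIV::('a^'n) set)" by (rule vec.dim_subset) simp
    then show ?thesis using dimC by (simp add: card_cart_basis)
  qed
  have dN: "\<delta> \<le> ?N"
  proof (rule ccontr)
    assume "\<not> \<delta> \<le> ?N"
    obtain B where B: "B \<subseteq> C0" "vec.independent B" "C0 \<subseteq> vec.span B" "card B = vec.dim C0"
      using vec.basis_exists by blast
    have fB: "finite B" using B(2) vec.finiteI_independent by blast
    have "\<forall>y\<in>(UNIV::('a^'n) set). \<forall>y'\<in>UNIV. wt (y - y') < \<delta>"
    proof (intro ballI)
      fix y y' :: "'a^'n"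
      have "wt (y - y') \<le> card (UNIV::'n set)" by (rule wt_le) simp
      then show "wt (y - y') < \<delta>" using \<open>\<not> \<delta> \<le> ?N\<close> by simp
    qed
    from F1[OF fB inj_dual[OF B(3) PC0 this]]
    have "?q ^ ?N \<le> ?q ^ k0" using B(4) dimC0 by simp
    then have "?N \<le> k0" using q2 by (simp add: power_le_imp_le_exp)
    then show False using kN assms(6) by simp
  qed
  have "\<delta> - 3 \<le> card (UNIV::'n set)" using dN by simp
  then obtain T' :: "'n set" where "T' \<subseteq> UNIV" and T': "card T' = \<delta> - 3"
    by (rule obtain_subset_with_card_n)
  have cUT: "card (UNIV - T') = ?N - (\<delta> - 3)" using T' by (simp add: card_Diff_subset)
  then have "UNIV - T' \<noteq> {}"
  proof (intro notI)
    assume "UNIV - T' = {}"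
    then have "card (UNIV - T') = 0" by simp
    then show False using cUT dN assms(3) by linarith
  qed
  then obtain i0 where i0: "i0 \<notin> T'" by blast
  have cnt: "?q ^ (\<delta> - 3) * (1 + (?q - 1) * (?N - (\<delta> - 3))) \<le> ?q ^ k0"
    using C0_count[OF subC0 dimC0 PC0 _ i0] T' assms(3) cUT by simp
  have "\<delta> - 2 \<le> card (UNIV::'n set)" using dN by simp
  then obtain T :: "'n set" where "T \<subseteq> UNIV" and T: "card T = \<delta> - 2"
    by (rule obtain_subset_with_card_n)
  define I where "I = UNIV - T"
  have cI: "card I = ?N - (\<delta> - 2)" using T unfolding I_def by (simp add: card_Diff_subset)
  obtain d0 where d0: "d0 \<in> C" "\<forall>t\<in>T. d0$t = 1"
    using cover_T[OF subC PC, of T] T assms(3) by auto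
  have cov1: "\<exists>x\<in>C. x$i \<noteq> 0" for i
  proof -
    obtain x where "x \<in> C" "\<forall>t\<in>{i}. x$t = 1" using cover_T[OF subC PC, of "{i}"] assms(3) by auto
    then show ?thesis by (metis singletonI zero_neq_one)
  qed
  define m where "m = k + 2 - \<delta>"
  define A where "A = 1 + (?q - 1) * (?N - (\<delta> - 3))"
  have A1: "1 \<le> A" unfolding A_def by simp
  have "?q ^ (\<delta> - 3) \<le> ?q ^ k0"
    using cnt A1 unfolding A_def[symmetric] by (metis mult_le_mono2 mult.right_neutral le_trans)
  then have dk0: "\<delta> - 3 \<le> k0" using q2 by (simp add: power_le_imp_le_exp)
  have "?q ^ (\<delta> - 3) * A \<le> ?q ^ (\<delta> - 3) * ?q ^ (k0 - (\<delta> - 3))"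
    using cnt dk0 unfolding A_def[symmetric] by (simp flip: power_add)
  then have Ale: "A \<le> ?q ^ (k0 - (\<delta> - 3))" using q2 by simp
  have "3 \<le> ?N - (\<delta> - 3)" using dN assms(3) by linarith
  then have A4: "1 + (?q - 1) * 3 \<le> A" unfolding A_def using mult_le_mono2 by simp
  have "2 \<le> A" using A4 q2 by linarith
  then have "1 \<le> k0 - (\<delta> - 3)" using Ale by (cases "k0 - (\<delta> - 3)") auto
  have mge: "k0 - (\<delta> - 3) \<le> m" unfolding m_def using assms(6) assms(3) by linarith
  have m1: "1 \<le> m" using \<open>1 \<le> k0 - (\<delta> - 3)\<close> mge by linarith
  have lt: "1 + (?q - 1) * card I < A"
  proof -
    have "?N - (\<delta> - 2) < ?N - (\<delta> - 3)" using dN assms(3) by linarith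
    moreover have "0 < ?q - 1" using q2 by simp
    ultimately have "(?q - 1) * (?N - (\<delta> - 2)) < (?q - 1) * (?N - (\<delta> - 3))" by simp
    then show ?thesis unfolding A_def cI by simp
  qed
  have big: "\<forall>p\<ge>m. 1 + (?q - 1) * card I < ?q ^ p"
  proof (intro allI impI)
    fix p assume "m \<le> p"
    then have "?q ^ (k0 - (\<delta> - 3)) \<le> ?q ^ p" using mge q2 by (intro power_increasing) auto
    then show "1 + (?q - 1) * card I < ?q ^ p" using lt Ale by linarith
  qed
  define B0 where "B0 = (\<lambda>i. SOME x. x \<in> C \<and> x$i \<noteq> 0) ` I"
  have B0C: "B0 \<subseteq> C" and B0cov: "\<forall>i\<in>I. \<exists>b\<in>B0. b$i \<noteq> 0"
  proof -
    have "(SOME x. x \<in> C \<and> x$i \<noteq> 0) \<in> C \<and> (SOME x. x \<in> C \<and> x$i \<noteq> 0) $ i \<noteq> 0" for i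
    proof -
      have "\<exists>x. x \<in> C \<and> x$i \<noteq> 0" using cov1[of i] by blast
      then show ?thesis by (rule someI_ex)
    qed
    then show "B0 \<subseteq> C" "\<forall>i\<in>I. \<exists>b\<in>B0. b$i \<noteq> 0" unfolding B0_def by auto
  qed
  obtain B' where B': "finite B'" "B' \<subseteq> C" "card B' \<le> m - 1" "\<forall>i\<in>I. \<exists>b\<in>B'. b$i \<noteq> 0"
    using reduce_iter[OF subC big, of B0] B0C B0cov unfolding B0_def by auto
  define S where "S = insert d0 B'"
  define D where "D = vec.span S"
  have fS: "finite S" using B'(1) by (simp add: S_def)
  have cS: "card S \<le> m" using B'(3) m1 unfolding S_def by (simp add: card_insert_if) linarith
  have subD: "vec.subspace D" unfolding D_def by (rule vec.subspace_span)
  have DC: "D \<subseteq> C" unfolding D_def using B'(2) d0(1) subC by (intro vec.span_minimal) (auto simp: S_def)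
  have dimD: "vec.dim D \<le> m" using vec.dim_le_card[of D S] fS cS unfolding D_def by simp
  have SD: "S \<subseteq> D" unfolding D_def by (rule vec.span_superset)
  have "T \<noteq> {}" using T assms(3) by auto
  then obtain t where "t \<in> T" by blast
  then have "d0 \<noteq> 0" using d0(2) by auto
  then have "vec.dim D \<noteq> 0" using SD unfolding S_def by (auto simp: vec.dim_eq_0)
  then have dpos: "0 < vec.dim D" using neq0_conv by blast
  have SuppD: "Supp D = UNIV"
  proof -
    have "i \<in> Supp D" for i
    proof (cases "i \<in> T")
      case True
      then show ?thesis using d0(2) SD unfolding Supp_def supp_def S_def by force
    next
      case False
      then have "i \<in> I" unfolding I_def by simp
      then obtain b where "b \<in> B'" "b$i \<noteq> 0" using B'(4) by blast
      then show ?thesis using SD unfolding Supp_def supp_def S_def by blast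
    qed
    then show ?thesis by blast
  qed
  have SuppC: "Supp C = UNIV" using cov1 unfolding Supp_def supp_def by blast
  have "(LEAST r. 0 < r \<and> (\<exists>D. vec.subspace D \<and> D \<subseteq> C \<and> vec.dim D = r \<and> Supp D = UNIV)) \<le> vec.dim D"
    by (rule Least_le) (use dpos subD DC SuppD in blast)
  then have "covering_dim C \<le> enat m"
    unfolding covering_dim_def using SuppC dimD by simp
  then show ?thesis unfolding m_def using assms(5) by simp
qed


end
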